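(* Let $F$ and $G$ be connected finite simple graphs such that $G$ is a $k$-fold cover of $F$. Then $\gamma_c(G) \leq k(\gamma_c(F) + 2) - 2$. Moreover, this bound is tight: for every positive integer $k$ there exist connected graphs $F$ and $G$ with $G$ a $k$-fold cover of $F$ such that $\gamma_c(G) = k(\gamma_c(F)+2) - 2$.
   Context: All graphs are finite, simple and undirected. A graph $G$ is a cover of a graph $F$ if there is an onto map $\pi: V(G)\to V(F)$ such that for every vertex $v$ of $G$, $\pi$ maps the neighbours of $v$ in $G$ bijectively onto the neighbours of $\pi(v)$ in $F$; the cover is $k$-fold if every fibre $\pi^{-1}(u)$ has exactly $k$ vertices. A connected dominating set of a graph is a set $S$ of vertices such that every vertex not in $S$ is adjacent to some vertex of $S$ and the subgraph induced by $S$ is connected; $\gamma_c(\cdot)$ denotes the connected domination number, the minimum size of a connected dominating set (defined for connected graphs). *)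

theory Defs
  imports Main
begin

definition simple_graph :: "'a set \<Rightarrow> ('a \<Rightarrow> 'a \<Rightarrow> bool) \<Rightarrow> bool" where
  "simple_graph V E \<longleftrightarrow> finite V \<and> (\<forall>x y. E x y \<longrightarrow> x \<in> V \<and> y \<in> V)
     \<and> (\<forall>x y. E x y \<longrightarrow> E y x) \<and> (\<forall>x. \<not> E x x)"

definition neighbours :: "'a set \<Rightarrow> ('a \<Rightarrow> 'a \<Rightarrow> bool) \<Rightarrow> 'a \<Rightarrow> 'a set" where
  "neighbours V E v = {w \<in> V. E v w}"

definition connected_on :: "'a set \<Rightarrow> ('a \<Rightarrow> 'a \<Rightarrow> bool) \<Rightarrow> bool" where
  "connected_on S E \<longleftrightarrow> S \<noteq> {} \<and>
     (\<forall>x\<in>S. \<forall>y\<in>S. (\<lambda>a b. a \<in> S \<and> b \<in> S \<and> E a b)\<^sup>*\<^sup>* x y)"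

definition connected_graph :: "'a set \<Rightarrow> ('a \<Rightarrow> 'a \<Rightarrow> bool) \<Rightarrow> bool" where
  "connected_graph V E \<longleftrightarrow> simple_graph V E \<and> connected_on V E"

definition connected_dominating_set ::
    "'a set \<Rightarrow> ('a \<Rightarrow> 'a \<Rightarrow> bool) \<Rightarrow> 'a set \<Rightarrow> bool" where
  "connected_dominating_set V E S \<longleftrightarrow> S \<subseteq> V
     \<and> (\<forall>v\<in>V - S. \<exists>s\<in>S. E v s) \<and> connected_on S E"

definition conn_dom_number :: "'a set \<Rightarrow> ('a \<Rightarrow> 'a \<Rightarrow> bool) \<Rightarrow> nat" where
  "conn_dom_number V E = (LEAST n. \<exists>S. connected_dominating_set V E S \<and> card S = n)"

definition is_cover ::
    "'a set \<Rightarrow> ('a \<Rightarrow> 'a \<Rightarrow> bool) \<Rightarrow> 'b set \<Rightarrow> ('b \<Rightarrow> 'b \<Rightarrow> bool) \<Rightarrow> ('a \<Rightarrow> 'b) \<Rightarrow> bool" where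
  "is_cover VG EG VF EF p \<longleftrightarrow> p ` VG = VF
     \<and> (\<forall>v\<in>VG. bij_betw p (neighbours VG EG v) (neighbours VF EF (p v)))"

definition is_k_fold_cover ::
    "nat \<Rightarrow> 'a set \<Rightarrow> ('a \<Rightarrow> 'a \<Rightarrow> bool) \<Rightarrow> 'b set \<Rightarrow> ('b \<Rightarrow> 'b \<Rightarrow> bool) \<Rightarrow> ('a \<Rightarrow> 'b) \<Rightarrow> bool" where
  "is_k_fold_cover k VG EG VF EF p \<longleftrightarrow> is_cover VG EG VF EF p
     \<and> (\<forall>u\<in>VF. card {v \<in> VG. p v = u} = k)"

end

theory Submission
  imports Defs
begin


definition reach :: "'a set \<Rightarrow> ('a \<Rightarrow> 'a \<Rightarrow> bool) \<Rightarrow> 'a \<Rightarrow> 'a \<Rightarrow> bool" where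
  "reach S E = (\<lambda>a b. a \<in> S \<and> b \<in> S \<and> E a b)\<^sup>*\<^sup>*"

lemma conn_reach: "connected_on S E \<longleftrightarrow> S \<noteq> {} \<and> (\<forall>x\<in>S. \<forall>y\<in>S. reach S E x y)"
  by (simp add: connected_on_def reach_def)

lemma reach_refl: "reach S E x x"
  by (simp add: reach_def)

lemma reach_step: "reach S E x y \<Longrightarrow> y \<in> S \<Longrightarrow> z \<in> S \<Longrightarrow> E y z \<Longrightarrow> reach S E x z"
  unfolding reach_def by (rule rtranclp.rtrancl_into_rtrancl) auto

lemma reach_trans: "reach S E x y \<Longrightarrow> reach S E y z \<Longrightarrow> reach S E x z"
  unfolding reach_def by (rule rtranclp_trans)

lemma reach_mono: assumes "reach S E x y" "S \<subseteq> T" shows "reach T E x y"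
  using assms(1) unfolding reach_def
proof (induction rule: rtranclp_induct)
  case base then show ?case by simp
next
  case (step y z) then show ?case using assms(2)
    by (metis (no_types, lifting) rtranclp.rtrancl_into_rtrancl subsetD)
qed

lemma reach_in: assumes "reach S E x y" "x \<in> S" shows "y \<in> S"
  using assms unfolding reach_def by (induction rule: rtranclp_induct) auto

lemma reach_sym: assumes "\<forall>x y. E x y \<longrightarrow> E y x" "reach S E x y" shows "reach S E y x"
  using assms(2) unfolding reach_def
proof (induction rule: rtranclp_induct)
  case base then show ?case by simp
next
  case (step y z)
  then have "(\<lambda>a b. a \<in> S \<and> b \<in> S \<and> E a b) z y" using assms(1) by auto
  then show ?case using step(3) by (rule converse_rtranclp_into_rtranclp)
qed

lemma cross:
  assumes "connected_on V E" "A \<subseteq> V" "a \<in> A" "b \<in> V - A"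
  shows "\<exists>y\<in>A. \<exists>w\<in>V-A. E y w"
proof -
  have "\<forall>x\<in>V. \<forall>y\<in>V. reach V E x y" using assms(1) by (simp add: conn_reach)
  then have r: "reach V E a b" using assms(2,3,4) by blast
  have "reach V E a w \<Longrightarrow> w \<notin> A \<Longrightarrow> \<exists>y\<in>A. \<exists>w\<in>V-A. E y w" for w
    unfolding reach_def
  proof (induction rule: rtranclp_induct)
    case base then show ?case using assms(3) by blast
  next
    case (step y z)
    from step(2) have yz: "y \<in> V" "z \<in> V" "E y z" by simp_all
    show ?case
    proof (cases "y \<in> A")
      case True then show ?thesis using yz step(4) by blast
    next
      case False then show ?thesis using step(3) by blast
    qed
  qed
  then show ?thesis using r assms(4) by blast
qed

lemma join:
  assumes sg: "simple_graph V E" and con: "connected_on V E"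
  shows "finite R \<Longrightarrow> R \<noteq> {} \<Longrightarrow> D \<subseteq> V \<Longrightarrow> (\<forall>v\<in>V-D. \<exists>s\<in>D. E v s) \<Longrightarrow> R \<subseteq> D
    \<Longrightarrow> (\<forall>x\<in>D. \<exists>r\<in>R. reach D E r x)
    \<Longrightarrow> \<exists>T. D \<subseteq> T \<and> T \<subseteq> V \<and> connected_on T E \<and> card T \<le> card D + 2 * (card R - 1)"
proof (induction "card R" arbitrary: R D rule: less_induct)
  case less
  have symE: "\<forall>x y. E x y \<longrightarrow> E y x" and EV: "\<forall>x y. E x y \<longrightarrow> x \<in> V \<and> y \<in> V"
    and finV: "finite V"
    using sg unfolding simple_graph_def by auto
  obtain r0 where r0: "r0 \<in> R" using less.prems by blast
  have r0D: "r0 \<in> D" using r0 less.prems by blast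
  define C where "C = {x\<in>D. reach D E r0 x}"
  have r0C: "r0 \<in> C" using r0D by (simp add: C_def reach_refl)
  show ?case
  proof (cases "D \<subseteq> C")
    case True
    have "connected_on D E"
      unfolding conn_reach
    proof (intro conjI ballI)
      show "D \<noteq> {}" using r0D by blast
    next
      fix x y assume "x \<in> D" "y \<in> D"
      then have "reach D E r0 x" "reach D E r0 y" using True C_def by auto
      then show "reach D E x y" using reach_sym[OF symE] reach_trans by metis
    qed
    then show ?thesis using less.prems by auto
  next
    case False
    then obtain z0 where z0: "z0 \<in> D" "z0 \<notin> C" by blast
    obtain P z where P: "P \<subseteq> V" "finite P" "card P \<le> 2" "z \<in> D" "z \<notin> C"
      "\<forall>x\<in>insert z P. reach (D \<union> P) E r0 x"
    proof -
      define A where "A = C \<union> {y\<in>V. \<exists>c\<in>C. E c y}"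
      have CD: "C \<subseteq> D" by (auto simp: C_def)
      have AC: "y \<notin> D" if yAC: "y \<in> A - C" for y
      proof
        assume yD: "y \<in> D"
        have "y \<in> {y\<in>V. \<exists>c\<in>C. E c y}" using yAC unfolding A_def by blast
        then obtain c where c: "c \<in> C" "E c y" by blast
        have "reach D E r0 c" using c(1) by (simp add: C_def)
        then have "reach D E r0 y" using c CD yD reach_step[of D E r0 c y] by auto
        then show False using yAC yD C_def by auto
      qed
      show ?thesis
      proof (cases "\<exists>y\<in>A-C. \<exists>z\<in>D-C. E y z")
        case True
        then obtain y z where yz: "y \<in> A - C" "z \<in> D - C" "E y z" by blast
        then obtain c where c: "c \<in> C" "E c y" "y \<in> V" by (auto simp: A_def)
        have "reach D E r0 c" using c(1) by (simp add: C_def)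
        then have rc: "reach (D \<union> {y}) E r0 c" by (rule reach_mono) blast
        have ry: "reach (D \<union> {y}) E r0 y" using rc c CD reach_step[of _ E r0 c y] by auto
        have rz: "reach (D \<union> {y}) E r0 z" using ry yz reach_step[of _ E r0 y z] by auto
        show ?thesis using that[of "{y}" z] c yz ry rz by auto
      next
        case False
        have z0A: "z0 \<notin> A" using z0 AC by blast
        have AV: "A \<subseteq> V" using CD less.prems(3) by (auto simp: A_def)
        have "r0 \<in> A" using r0C by (simp add: A_def)
        then obtain y w where yw: "y \<in> A" "w \<in> V - A" "E y w"
          using cross[OF con AV] z0A z0 less.prems(3) by blast
        have yC: "y \<notin> C" using yw EV by (auto simp: A_def)
        have wD: "w \<notin> D"
        proof
          assume "w \<in> D"
          then have "w \<in> D - C" using yw by (auto simp: A_def)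
          then show False using False yw yC by blast
        qed
        then obtain d where d: "d \<in> D" "E w d" using less.prems(4) yw by blast
        have dC: "d \<notin> C"
        proof
          assume "d \<in> C"
          then have "w \<in> A" using d symE yw by (auto simp: A_def)
          then show False using yw by blast
        qed
        obtain c where c: "c \<in> C" "E c y" "y \<in> V" using yw yC by (auto simp: A_def)
        have "reach D E r0 c" using c(1) by (simp add: C_def)
        then have rc: "reach (D \<union> {y, w}) E r0 c" by (rule reach_mono) blast
        have ry: "reach (D \<union> {y, w}) E r0 y" using rc c CD reach_step[of _ E r0 c y] by auto
        have rw: "reach (D \<union> {y, w}) E r0 w" using ry yw reach_step[of _ E r0 y w] by auto
        have rd: "reach (D \<union> {y, w}) E r0 d" using rw d reach_step[of _ E r0 w d] by auto
        have "card {y, w} \<le> 2" by (cases "y = w") auto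
        then show ?thesis using that[of "{y, w}" d] yw c d dC ry rw rd by auto
      qed
    qed
    obtain r where r: "r \<in> R" "reach D E r z" using P less.prems(6) by blast
    have rC: "r \<notin> C"
    proof
      assume "r \<in> C"
      then have "reach D E r0 z" using r reach_trans C_def by fastforce
      then show False using P C_def by auto
    qed
    have rr0: "r \<noteq> r0" using rC r0C by blast
    define D' where "D' = D \<union> P"
    define R' where "R' = R - {r}"
    have cR: "card R' < card R" unfolding R'_def by (rule card_Diff1_less[OF less.prems(1) r(1)])
    have r0R': "r0 \<in> R'" using r0 rr0 by (simp add: R'_def)
    have "\<exists>T. D' \<subseteq> T \<and> T \<subseteq> V \<and> connected_on T E \<and> card T \<le> card D' + 2 * (card R' - 1)"
    proof (rule less.hyps[OF cR])
      show "finite R'" using less.prems(1) by (simp add: R'_def)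
      show "R' \<noteq> {}" using r0R' by blast
      show "D' \<subseteq> V" using P less.prems(3) by (simp add: D'_def)
      show "\<forall>v\<in>V - D'. \<exists>s\<in>D'. E v s" using less.prems(4) by (auto simp: D'_def)
      show "R' \<subseteq> D'" using less.prems(5) by (auto simp: D'_def R'_def)
      show "\<forall>x\<in>D'. \<exists>r\<in>R'. reach D' E r x"
      proof
        fix x assume x: "x \<in> D'"
        show "\<exists>r\<in>R'. reach D' E r x"
        proof (cases "x \<in> P")
          case True then show ?thesis using P r0R' D'_def by auto
        next
          case False
          then have xD: "x \<in> D" using x D'_def by auto
          then obtain r1 where r1: "r1 \<in> R" "reach D E r1 x" using less.prems(6) by blast
          show ?thesis
          proof (cases "r1 = r")
            case False
            have DD': "D \<subseteq> D'" by (simp add: D'_def)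
            then show ?thesis using r1 reach_mono[OF r1(2) DD'] False R'_def by auto
          next
            case True
            have a: "reach D' E r0 z" using P D'_def by auto
            have DD': "D \<subseteq> D'" by (simp add: D'_def)
            have b: "reach D' E z r" using reach_mono[OF reach_sym[OF symE r(2)] DD'] .
            have c: "reach D' E r x" using reach_mono[OF r1(2) DD'] True by simp
            show ?thesis using a b c reach_trans r0R' by metis
          qed
        qed
      qed
    qed
    then obtain T where T: "D' \<subseteq> T" "T \<subseteq> V" "connected_on T E"
      "card T \<le> card D' + 2 * (card R' - 1)" by blast
    have finD: "finite D" using less.prems(3) finV finite_subset by blast
    have "card D' \<le> card D + card P" unfolding D'_def by (rule card_Un_le)
    moreover have "card R' \<ge> 1" using r0R' less.prems(1) R'_def
      by (metis One_nat_def Suc_leI card_gt_0_iff empty_iff finite_Diff)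
    moreover have "card R = Suc (card R')" unfolding R'_def
      by (rule card_Suc_Diff1[OF less.prems(1) r(1), symmetric])
    ultimately have "card T \<le> card D + 2 * (card R - 1)" using T(4) P(3) by linarith
    then show ?thesis using T D'_def by auto
  qed
qed



lemma lift_edge:
  assumes "is_cover VG EG VF EF p" "v \<in> VG" "u \<in> VF" "EF (p v) u"
  shows "\<exists>w\<in>VG. EG v w \<and> p w = u"
proof -
  have "bij_betw p (neighbours VG EG v) (neighbours VF EF (p v))"
    using assms(1,2) by (simp add: is_cover_def)
  then have "p ` (neighbours VG EG v) = neighbours VF EF (p v)" by (rule bij_betw_imp_surj_on)
  moreover have "u \<in> neighbours VF EF (p v)" using assms(3,4) by (simp add: neighbours_def)
  ultimately obtain w where "w \<in> neighbours VG EG v" "p w = u" by (metis imageE)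
  then show ?thesis by (auto simp: neighbours_def)
qed

lemma part1:
  assumes cF: "connected_graph VF EF" and cG: "connected_graph VG EG"
    and cov: "is_k_fold_cover k VG EG VF EF p"
  shows "conn_dom_number VG EG \<le> k * (conn_dom_number VF EF + 2) - 2"
proof -
  have sgF: "simple_graph VF EF" and conF: "connected_on VF EF"
    and sgG: "simple_graph VG EG" and conG: "connected_on VG EG"
    using cF cG by (auto simp: connected_graph_def)
  have finG: "finite VG" using sgG by (simp add: simple_graph_def)
  have EFV: "\<forall>x y. EF x y \<longrightarrow> x \<in> VF \<and> y \<in> VF" using sgF by (simp add: simple_graph_def)
  have EGV: "\<forall>x y. EG x y \<longrightarrow> x \<in> VG \<and> y \<in> VG" using sgG by (simp add: simple_graph_def)
  have symG: "\<forall>x y. EG x y \<longrightarrow> EG y x" using sgG by (simp add: simple_graph_def)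
  have isc: "is_cover VG EG VF EF p" and fib: "\<forall>u\<in>VF. card {v \<in> VG. p v = u} = k"
    using cov by (auto simp: is_k_fold_cover_def)
  have pVG: "p ` VG = VF" using isc by (simp add: is_cover_def)
  have "connected_dominating_set VF EF VF"
    using conF by (simp add: connected_dominating_set_def)
  then have "\<exists>n S. connected_dominating_set VF EF S \<and> card S = n" by blast
  then have "\<exists>S. connected_dominating_set VF EF S \<and> card S = conn_dom_number VF EF"
    unfolding conn_dom_number_def by (rule LeastI_ex[of "\<lambda>n. \<exists>S. connected_dominating_set VF EF S \<and> card S = n"])
  then obtain S where S: "connected_dominating_set VF EF S" "card S = conn_dom_number VF EF" by blast
  have SVF: "S \<subseteq> VF" and domS: "\<forall>v\<in>VF - S. \<exists>s\<in>S. EF v s" and conS: "connected_on S EF"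
    using S(1) by (auto simp: connected_dominating_set_def)
  obtain s0 where s0: "s0 \<in> S" using conS by (auto simp: connected_on_def)
  define D where "D = {v\<in>VG. p v \<in> S}"
  define R where "R = {v\<in>VG. p v = s0}"
  have cardR: "card R = k" using fib s0 SVF R_def by auto
  have finR: "finite R" using finG R_def by simp
  have "s0 \<in> p ` VG" using pVG s0 SVF by auto
  then have Rne: "R \<noteq> {}" using R_def by auto
  then have k1: "k \<ge> 1" using cardR finR by (metis One_nat_def Suc_leI card_gt_0_iff)
  have DVG: "D \<subseteq> VG" using D_def by auto
  have RD: "R \<subseteq> D" using R_def D_def s0 by auto
  have domD: "\<forall>v\<in>VG - D. \<exists>s\<in>D. EG v s"
  proof
    fix v assume v: "v \<in> VG - D"
    then have "p v \<in> VF - S" using pVG D_def by auto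
    then obtain s where s: "s \<in> S" "EF (p v) s" using domS by blast
    then obtain w where "w \<in> VG" "EG v w" "p w = s"
      using lift_edge[OF isc _ _ s(2)] v SVF by blast
    then show "\<exists>s\<in>D. EG v s" using s D_def by auto
  qed
  have lift: "\<And>x. x \<in> D \<Longrightarrow> p x = a \<Longrightarrow> \<exists>y. p y = b \<and> reach D EG x y"
    if "reach S EF a b" for a b
    using that unfolding reach_def[of S]
  proof (induction rule: rtranclp_induct)
    case base then show ?case using reach_refl[of D EG x] by blast
  next
    case (step b c)
    from step(2) have bc: "b \<in> S" "c \<in> S" "EF b c" by simp_all
    obtain y where y: "p y = b" "reach D EG x y" using step(3)[OF step(4,5)] by blast
    have yD: "y \<in> D" using reach_in[OF y(2) step(4)] .
    then have "y \<in> VG" using D_def by auto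
    then obtain y' where y': "y' \<in> VG" "EG y y'" "p y' = c"
      using lift_edge[OF isc, of y c] bc y(1) SVF by auto
    have "y' \<in> D" using y' bc D_def by auto
    then have "reach D EG x y'" using reach_step[OF y(2) yD _ y'(2)] by simp
    then show ?case using y' by blast
  qed
  have reachR: "\<forall>x\<in>D. \<exists>r\<in>R. reach D EG r x"
  proof
    fix x assume x: "x \<in> D"
    then have "p x \<in> S" using D_def by auto
    then have "reach S EF (p x) s0" using conS s0 by (simp add: conn_reach)
    then obtain y where y: "p y = s0" "reach D EG x y" using lift x by blast
    have "y \<in> D" using reach_in[OF y(2) x] .
    then have "y \<in> R" using y(1) D_def R_def by auto
    then show "\<exists>r\<in>R. reach D EG r x" using reach_sym[OF symG y(2)] by blast
  qed
  obtain T where T: "D \<subseteq> T" "T \<subseteq> VG" "connected_on T EG" "card T \<le> card D + 2 * (card R - 1)"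
    using join[OF sgG conG finR Rne DVG domD RD reachR] by blast
  have "connected_dominating_set VG EG T"
    using T domD unfolding connected_dominating_set_def by blast
  then have le: "conn_dom_number VG EG \<le> card T"
    unfolding conn_dom_number_def by (intro Least_le) blast
  have finS: "finite S" using SVF sgF by (meson finite_subset simple_graph_def)
  have "D = (\<Union>u\<in>S. {v\<in>VG. p v = u})" using D_def by auto
  moreover have "card (\<Union>u\<in>S. {v\<in>VG. p v = u}) = (\<Sum>u\<in>S. card {v\<in>VG. p v = u})"
    using finS finG by (intro card_UN_disjoint) auto
  ultimately have "card D = (\<Sum>u\<in>S. card {v\<in>VG. p v = u})" by simp
  also have "\<dots> = (\<Sum>u\<in>S. k)" using fib SVF by (intro sum.cong) auto
  finally have cD: "card D = k * card S" by simp
  obtain k' where k': "k = Suc k'" using k1 by (cases k) auto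
  have "card T \<le> k * card S + 2 * (k - 1)" using T(4) cD cardR by simp
  then show ?thesis using le S(2) k' by (simp add: algebra_simps)
qed



definition cyc :: "nat \<Rightarrow> nat \<Rightarrow> nat \<Rightarrow> bool" where
  "cyc n i j \<longleftrightarrow> i < n \<and> j < n \<and> (j = Suc i mod n \<or> i = Suc j mod n)"

lemma suc_mod: "i < n \<Longrightarrow> Suc i mod n = (if Suc i = n then 0 else Suc i)"
  by auto

lemma cyc_iff: "i < n \<Longrightarrow> j < n \<Longrightarrow> n \<ge> 3 \<Longrightarrow>
  cyc n i j \<longleftrightarrow> (j = (if Suc i = n then 0 else Suc i) \<or> i = (if Suc j = n then 0 else Suc j))"
  unfolding cyc_def by (simp add: suc_mod)

lemma cyc_simple: "n \<ge> 3 \<Longrightarrow> simple_graph {0..<n} (cyc n)"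
  unfolding simple_graph_def cyc_def by (auto simp: suc_mod)

lemma reach_interval:
  assumes "lo \<le> i" "i \<le> j" "j \<le> hi" "hi < n"
  shows "reach {lo..hi} (cyc n) i j"
  using assms
proof (induction j)
  case 0 then show ?case by (simp add: reach_refl)
next
  case (Suc j)
  show ?case
  proof (cases "i = Suc j")
    case True then show ?thesis by (simp add: reach_refl)
  next
    case False
    then have r: "reach {lo..hi} (cyc n) i j" using Suc by simp
    have "cyc n j (Suc j)" using Suc.prems by (simp add: cyc_def)
    then show ?thesis using reach_step[OF r] Suc.prems False by simp
  qed
qed

lemma cyc_sym: "\<forall>x y. cyc n x y \<longrightarrow> cyc n y x"
  by (auto simp: cyc_def)

lemma interval_conn:
  assumes "lo \<le> hi" "hi < n"
  shows "connected_on {lo..hi} (cyc n)"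
  unfolding conn_reach
proof (intro conjI ballI)
  show "{lo..hi} \<noteq> {}" using assms by simp
next
  fix x y assume "x \<in> {lo..hi}" "y \<in> {lo..hi}"
  then have "reach {lo..hi} (cyc n) lo x" "reach {lo..hi} (cyc n) lo y"
    using reach_interval assms by auto
  then show "reach {lo..hi} (cyc n) x y" using reach_sym[OF cyc_sym] reach_trans by metis
qed

lemma cyc_connected: "n \<ge> 3 \<Longrightarrow> connected_graph {0..<n} (cyc n)"
proof -
  assume n: "n \<ge> 3"
  have "{0..<n} = {0..n-1}" using n by auto
  moreover have "connected_on {0..n-1} (cyc n)" using n by (intro interval_conn) auto
  ultimately show ?thesis using cyc_simple[OF n] by (simp add: connected_graph_def)
qed

lemma cyc_upper: "n \<ge> 3 \<Longrightarrow> connected_dominating_set {0..<n} (cyc n) {0..n-3}"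
proof -
  assume n: "n \<ge> 3"
  have c: "connected_on {0..n-3} (cyc n)" using n by (intro interval_conn) auto
  have d: "\<forall>v\<in>{0..<n} - {0..n-3}. \<exists>s\<in>{0..n-3}. cyc n v s"
  proof
    fix v assume v: "v \<in> {0..<n} - {0..n-3}"
    then have "v = n - 2 \<or> v = n - 1" by auto
    then show "\<exists>s\<in>{0..n-3}. cyc n v s"
    proof
      assume "v = n - 2"
      then have "cyc n v (n - 3)" using n by (auto simp: cyc_def suc_mod)
      then show ?thesis by auto
    next
      assume "v = n - 1"
      then have "cyc n v 0" using n by (auto simp: cyc_def suc_mod)
      then show ?thesis by auto
    qed
  qed
  show ?thesis using c d n by (auto simp: connected_dominating_set_def)
qed

lemma cds_image:
  assumes sg: "simple_graph V E" and bij: "bij_betw g V V"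
    and pres: "\<forall>x\<in>V. \<forall>y\<in>V. E x y \<longleftrightarrow> E (g x) (g y)"
    and cds: "connected_dominating_set V E S"
  shows "connected_dominating_set V E (g ` S) \<and> card (g ` S) = card S"
proof -
  have SV: "S \<subseteq> V" and dom: "\<forall>v\<in>V - S. \<exists>s\<in>S. E v s" and con: "connected_on S E"
    using cds by (auto simp: connected_dominating_set_def)
  have EV: "\<forall>x y. E x y \<longrightarrow> x \<in> V \<and> y \<in> V" using sg by (simp add: simple_graph_def)
  have gV: "g ` V = V" using bij by (simp add: bij_betw_def)
  have inj: "inj_on g V" using bij by (simp add: bij_betw_def)
  have rg: "reach (g ` S) E (g x) (g y)" if "reach S E x y" for x y
    using that unfolding reach_def
  proof (induction rule: rtranclp_induct)
    case base then show ?case by simp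
  next
    case (step y z)
    from step(2) have yz: "y \<in> S" "z \<in> S" "E y z" by simp_all
    then have "E (g y) (g z)" using pres SV by blast
    then have "reach (g ` S) E (g x) (g z)"
      using reach_step[of "g ` S" E "g x" "g y" "g z"] step(3) yz unfolding reach_def by blast
    then show ?case unfolding reach_def .
  qed
  have c: "connected_on (g ` S) E"
    unfolding conn_reach
  proof (intro conjI ballI)
    show "g ` S \<noteq> {}" using con by (auto simp: connected_on_def)
  next
    fix u v assume "u \<in> g ` S" "v \<in> g ` S"
    then obtain x y where "x \<in> S" "y \<in> S" "u = g x" "v = g y" by blast
    then show "reach (g ` S) E u v" using rg con by (simp add: conn_reach)
  qed
  have d: "\<forall>v\<in>V - g ` S. \<exists>s\<in>g ` S. E v s"
  proof
    fix v assume v: "v \<in> V - g ` S"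
    then obtain w where w: "w \<in> V" "v = g w" using gV by auto
    then have "w \<notin> S" using v by auto
    then obtain s where s: "s \<in> S" "E w s" using dom w by blast
    then have "E (g w) (g s)" using pres w EV by blast
    then show "\<exists>s\<in>g ` S. E v s" using s w by blast
  qed
  have "g ` S \<subseteq> V" using SV gV by auto
  moreover have "card (g ` S) = card S" using inj SV by (meson card_image inj_on_subset)
  ultimately show ?thesis using c d by (simp add: connected_dominating_set_def)
qed

lemma dvd_small: "n dvd (m::nat) \<Longrightarrow> m < n \<Longrightarrow> m = 0"
  using dvd_imp_le by fastforce

lemma rot_inj:
  assumes "x < n" "y < n" "(x + c) mod n = (y + c) mod (n::nat)"
  shows "x = y"
proof (cases "y \<le> x")
  case True
  then have "n dvd (x + c) - (y + c)" using assms(3) mod_eq_dvd_iff_nat[of "y + c" "x + c" n] by simp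
  then have "n dvd x - y" by simp
  then have "x - y = 0" using dvd_small assms(1) by (meson less_imp_diff_less)
  then show ?thesis using True by simp
next
  case False
  then have "n dvd (y + c) - (x + c)" using assms(3) mod_eq_dvd_iff_nat[of "x + c" "y + c" n] by simp
  then have "n dvd y - x" by simp
  then have "y - x = 0" using dvd_small assms(2) by (meson less_imp_diff_less)
  then show ?thesis using False by simp
qed

lemma rotate_cds:
  assumes n: "n \<ge> 3" and a: "a < n" and cds: "connected_dominating_set {0..<n} (cyc n) S"
  shows "connected_dominating_set {0..<n} (cyc n) ((\<lambda>v. (v + (n - a)) mod n) ` S)
     \<and> card ((\<lambda>v. (v + (n - a)) mod n) ` S) = card S"
proof (rule cds_image[OF cyc_simple[OF n] _ _ cds])
  define g where "g = (\<lambda>v. (v + (n - a)) mod n)"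
  have inj: "inj_on g {0..<n}" unfolding inj_on_def g_def using rot_inj by auto
  have "g ` {0..<n} = {0..<n}"
  proof
    show "g ` {0..<n} \<subseteq> {0..<n}" using n by (auto simp: g_def)
  next
    show "{0..<n} \<subseteq> g ` {0..<n}"
    proof
      fix y assume y: "y \<in> {0..<n}"
      have "g ((y + a) mod n) = (y + a + (n - a)) mod n" by (simp add: g_def mod_add_left_eq)
      also have "\<dots> = (y + n) mod n" using a by simp
      also have "\<dots> = y" using y by simp
      finally show "y \<in> g ` {0..<n}" using n by (metis atLeastLessThan_iff image_eqI le0 mod_less_divisor neq0_conv not_numeral_le_zero)
    qed
  qed
  then show "bij_betw (\<lambda>v. (v + (n - a)) mod n) {0..<n} {0..<n}"
    using inj unfolding g_def bij_betw_def by simp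
  have gsuc: "Suc (g x) mod n = g (Suc x mod n)" for x
    by (simp add: g_def mod_Suc_eq mod_add_left_eq)
  have glt: "g x < n" for x using n by (simp add: g_def)
  show "\<forall>x\<in>{0..<n}. \<forall>y\<in>{0..<n}. cyc n x y \<longleftrightarrow> cyc n ((\<lambda>v. (v + (n - a)) mod n) x) ((\<lambda>v. (v + (n - a)) mod n) y)"
  proof (intro ballI)
    fix x y assume x: "x \<in> {0..<n}" and y: "y \<in> {0..<n}"
    have sx: "Suc x mod n < n" "Suc y mod n < n" using n by auto
    have "(g y = g (Suc x mod n)) \<longleftrightarrow> y = Suc x mod n"
      using rot_inj[of y n "Suc x mod n"] x y sx by (auto simp: g_def)
    moreover have "(g x = g (Suc y mod n)) \<longleftrightarrow> x = Suc y mod n"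
      using rot_inj[of x n "Suc y mod n"] x y sx by (auto simp: g_def)
    ultimately have "cyc n x y \<longleftrightarrow> cyc n (g x) (g y)"
      using x y glt gsuc by (auto simp: cyc_def)
    then show "cyc n x y \<longleftrightarrow> cyc n ((\<lambda>v. (v + (n - a)) mod n) x) ((\<lambda>v. (v + (n - a)) mod n) y)"
      by (simp add: g_def)
  qed
qed

lemma lower0:
  assumes n: "n \<ge> 3" and cds: "connected_dominating_set {0..<n} (cyc n) S" and S0: "0 \<notin> S"
  shows "n - 2 \<le> card S"
proof -
  have SV: "S \<subseteq> {0..<n}" and dom: "\<forall>v\<in>{0..<n} - S. \<exists>s\<in>S. cyc n v s"
    and con: "connected_on S (cyc n)"
    using cds by (auto simp: connected_dominating_set_def)
  have Sne: "S \<noteq> {}" using con by (simp add: connected_on_def)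
  have finS: "finite S" using SV finite_subset by blast
  have edge: "j = Suc i \<or> i = Suc j" if "i \<in> S" "j \<in> S" "cyc n i j" for i j
  proof -
    have "i \<noteq> 0" using that(1) S0 by metis
    moreover have "j \<noteq> 0" using that(2) S0 by metis
    moreover have "i < n" "j < n" using that SV by auto
    ultimately show ?thesis using that(3) by (auto simp: cyc_def suc_mod split: if_splits)
  qed
  have intv: "\<forall>z. min x w \<le> z \<and> z \<le> max x w \<longrightarrow> z \<in> S" if "x \<in> S" "reach S (cyc n) x w" for x w
    using that(2) unfolding reach_def
  proof (induction rule: rtranclp_induct)
    case base then show ?case using that(1) by (simp add: min_def max_def) (metis le_antisym)
  next
    case (step y z)
    from step(2) have yz: "y \<in> S" "z \<in> S" "cyc n y z" by simp_all
    then have "z = Suc y \<or> y = Suc z" using edge by blast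
    show ?case
    proof (intro allI impI)
      fix t assume t: "min x z \<le> t \<and> t \<le> max x z"
      show "t \<in> S"
      proof (cases "t = z")
        case True then show ?thesis using yz(2) by simp
      next
        case False
        have "min x y \<le> t \<and> t \<le> max x y"
          using t False \<open>z = Suc y \<or> y = Suc z\<close> unfolding min_def max_def by (simp split: if_splits; linarith)
        then show ?thesis using step(3) by blast
      qed
    qed
  qed
  define lo where "lo = Min S"
  define hi where "hi = Max S"
  have lo: "lo \<in> S" "\<forall>s\<in>S. lo \<le> s" using finS Sne lo_def by auto
  have hi: "hi \<in> S" "\<forall>s\<in>S. s \<le> hi" using finS Sne hi_def by auto
  have "reach S (cyc n) lo hi" using con lo hi by (simp add: conn_reach)
  then have m: "\<forall>z. min lo hi \<le> z \<and> z \<le> max lo hi \<longrightarrow> z \<in> S" by (rule intv[OF lo(1)])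
  have "lo \<le> hi" using lo hi by blast
  then have mm: "min lo hi = lo" "max lo hi = hi" by simp_all
  have Seq: "S = {lo..hi}"
  proof
    show "S \<subseteq> {lo..hi}" using lo(2) hi(2) by auto
    show "{lo..hi} \<subseteq> S"
    proof
      fix z assume "z \<in> {lo..hi}"
      then have "min lo hi \<le> z \<and> z \<le> max lo hi" unfolding mm by simp
      then show "z \<in> S" using m by blast
    qed
  qed
  have lo1: "lo \<ge> 1" using lo S0 by (cases lo) auto
  have hin: "hi < n" using hi SV by auto
  have "0 \<in> {0..<n} - S" using n S0 by auto
  then have "\<exists>s\<in>S. cyc n 0 s" using dom by blast
  then obtain s0 where s0: "s0 \<in> S" "cyc n 0 s0" by blast
  have "s0 < n" using s0 SV by auto
  then have "s0 = 1 \<or> s0 = n - 1" using s0(2) n cyc_iff[of 0 n s0] by (auto split: if_splits)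
  then have c0: "1 \<in> S \<or> n - 1 \<in> S" using s0 by auto
  have lo2: "lo \<le> 2"
  proof (rule ccontr)
    assume "\<not> lo \<le> 2"
    then have "1 \<notin> S" using lo by auto
    then have "1 \<in> {0..<n} - S" using n by auto
    then obtain s where s: "s \<in> S" "cyc n 1 s" using dom by blast
    have "s < n" using s SV by auto
    then have "s = 0 \<or> s = 2" using s(2) n cyc_iff[of 1 n s] by (auto split: if_splits)
    then show False using \<open>\<not> lo \<le> 2\<close> lo s S0 by auto
  qed
  have hi2: "hi + 2 \<ge> n"
  proof (rule ccontr)
    assume "\<not> hi + 2 \<ge> n"
    then have "n - 1 \<notin> S" using hi by auto
    then have "n - 1 \<in> {0..<n} - S" using n by auto
    then obtain s where s: "s \<in> S" "cyc n (n - 1) s" using dom by blast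
    have "s < n" using s SV by auto
    then have "s = 0 \<or> s = n - 2" using s(2) n cyc_iff[of "n - 1" n s] by (auto split: if_splits)
    then show False using \<open>\<not> hi + 2 \<ge> n\<close> hi s S0 by auto
  qed
  have "lo = 1 \<or> hi = n - 1"
  proof (cases "1 \<in> S")
    case True then show ?thesis using lo(2) lo1 by (simp add: le_antisym)
  next
    case False then have "n - 1 \<in> S" using c0 by blast
    then show ?thesis using hi(2) hin by (simp add: le_antisym)
  qed
  then show ?thesis using Seq lo2 hi2 lo1 hin by auto
qed

lemma lower:
  assumes n: "n \<ge> 3" and cds: "connected_dominating_set {0..<n} (cyc n) S"
  shows "n - 2 \<le> card S"
proof (cases "S = {0..<n}")
  case True then show ?thesis by simp
next
  case False
  have SV: "S \<subseteq> {0..<n}" using cds by (simp add: connected_dominating_set_def)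
  have "\<not> {0..<n} \<subseteq> S" using SV False by blast
  then obtain a where a0: "a \<in> {0..<n}" "a \<notin> S" by blast
  then have a: "a < n" "a \<notin> S" by auto
  define g where "g = (\<lambda>v. (v + (n - a)) mod n)"
  have r: "connected_dominating_set {0..<n} (cyc n) (g ` S) \<and> card (g ` S) = card S"
    using rotate_cds[OF n a(1) cds] by (simp add: g_def)
  have "0 \<notin> g ` S"
  proof
    assume "0 \<in> g ` S"
    then obtain x where x: "x \<in> S" "g x = 0" by auto
    have "g a = 0" using a by (simp add: g_def)
    then have "x = a" using rot_inj[of x n a "n - a"] x SV a by (auto simp: g_def)
    then show False using x a by simp
  qed
  then show ?thesis using lower0[OF n] r by metis
qed

lemma cdn_cyc: "n \<ge> 3 \<Longrightarrow> conn_dom_number {0..<n} (cyc n) = n - 2"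
  unfolding conn_dom_number_def
proof (rule Least_equality)
  assume n: "n \<ge> 3"
  show "\<exists>S. connected_dominating_set {0..<n} (cyc n) S \<and> card S = n - 2"
    using cyc_upper[OF n] n by (intro exI[of _ "{0..n-3}"]) auto
  show "\<And>y. \<exists>S. connected_dominating_set {0..<n} (cyc n) S \<and> card S = y \<Longrightarrow> n - 2 \<le> y"
    using lower[OF n] by blast
qed



lemma pred_mod: "v < (n::nat) \<Longrightarrow> (v + n - 1) mod n = (if v = 0 then n - 1 else v - 1)"
proof (cases "v = 0")
  case True
  assume "v < n" then have "n - 1 < n" by (cases n) auto
  then show ?thesis using True by simp
next
  case False
  assume v: "v < n"
  then have e: "v + n - 1 = (v - 1) + n" using False by simp
  have "((v - 1) + n) mod n = (v - 1) mod n" by simp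
  also have "\<dots> = v - 1" using v by simp
  finally show ?thesis using False e by simp
qed

lemma neighbours_cyc:
  assumes n: "n \<ge> 3" and v: "v < n"
  shows "neighbours {0..<n} (cyc n) v = {Suc v mod n, (v + n - 1) mod n}"
proof (rule set_eqI)
  fix w
  show "w \<in> neighbours {0..<n} (cyc n) v \<longleftrightarrow> w \<in> {Suc v mod n, (v + n - 1) mod n}"
  proof (cases "w < n")
    case True
    have "cyc n v w \<longleftrightarrow> (w = (if Suc v = n then 0 else Suc v) \<or> v = (if Suc w = n then 0 else Suc w))"
      using cyc_iff[OF v True n] .
    moreover have "Suc v mod n = (if Suc v = n then 0 else Suc v)" using suc_mod[OF v] .
    moreover have "(v + n - 1) mod n = (if v = 0 then n - 1 else v - 1)" using pred_mod[OF v] .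
    ultimately show ?thesis using True v n unfolding neighbours_def by (auto split: if_splits)
  next
    case False
    then show ?thesis using n v unfolding neighbours_def by auto
  qed
qed

lemma bij2: "f a \<noteq> f b \<Longrightarrow> bij_betw f {a, b} {f a, f b}"
  by (auto simp: bij_betw_def inj_on_def)

lemma cover3:
  assumes k: "k \<ge> 1"
  shows "is_k_fold_cover k {0..<3*k} (cyc (3*k)) {0..<3} (cyc 3) (\<lambda>i. i mod 3)"
proof -
  define N where "N = 3 * k"
  have N3: "N \<ge> 3" using k N_def by simp
  have img: "(\<lambda>i. i mod 3) ` {0..<N} = {0..<3}"
  proof
    show "(\<lambda>i. i mod (3::nat)) ` {0..<N} \<subseteq> {0..<3}" by auto
    show "{0..<3} \<subseteq> (\<lambda>i. i mod (3::nat)) ` {0..<N}"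
    proof
      fix u :: nat assume u: "u \<in> {0..<3}"
      then have "u = u mod 3" "u \<in> {0..<N}" using N3 by auto
      then show "u \<in> (\<lambda>i. i mod 3) ` {0..<N}" by blast
    qed
  qed
  have nb: "bij_betw (\<lambda>i. i mod 3) (neighbours {0..<N} (cyc N) v) (neighbours {0..<3} (cyc 3) (v mod 3))"
    if v: "v \<in> {0..<N}" for v
  proof -
    have vN: "v < N" using v by simp
    have d3: "(3::nat) dvd N" using N_def by simp
    have f1: "Suc v mod N mod 3 = Suc (v mod 3) mod 3"
      using d3 by (simp add: mod_mod_cancel mod_Suc_eq)
    have "v + N - 1 = (v + 2) + 3 * (k - 1)" using k N_def by simp
    then have "(v + N - 1) mod 3 = (v + 2) mod 3" using mod_mult_self2[of "v + 2" 3 "k - 1"] by metis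
    moreover have "(v + N - 1) mod N mod 3 = (v + N - 1) mod 3" using d3 by (rule mod_mod_cancel)
    moreover have "(v + 2) mod 3 = (v mod 3 + 2) mod 3" by (rule mod_add_left_eq[symmetric])
    moreover have "v mod 3 + 3 - 1 = v mod 3 + 2" by simp
    ultimately have f2: "(v + N - 1) mod N mod 3 = (v mod 3 + 3 - 1) mod 3" by metis
    have ne: "Suc (v mod 3) mod 3 \<noteq> (v mod 3 + 3 - 1) mod 3"
    proof -
      have "v mod 3 < 3" by simp
      then have "v mod 3 = 0 \<or> v mod 3 = 1 \<or> v mod 3 = 2" by linarith
      then show ?thesis by auto
    qed
    have "neighbours {0..<N} (cyc N) v = {Suc v mod N, (v + N - 1) mod N}"
      using neighbours_cyc[OF N3 vN] .
    moreover have "neighbours {0..<3} (cyc 3) (v mod 3) = {Suc (v mod 3) mod 3, (v mod 3 + 3 - 1) mod 3}"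
      using neighbours_cyc[of 3 "v mod 3"] by simp
    ultimately show ?thesis using bij2[of "\<lambda>i. i mod 3" "Suc v mod N" "(v + N - 1) mod N"] f1 f2 ne
      by simp
  qed
  have fib: "card {v \<in> {0..<N}. v mod 3 = u} = k" if u: "u \<in> {0..<3}" for u
  proof -
    have "{v \<in> {0..<N}. v mod 3 = u} = (\<lambda>j. 3 * j + u) ` {0..<k}"
    proof
      show "{v \<in> {0..<N}. v mod 3 = u} \<subseteq> (\<lambda>j. 3 * j + u) ` {0..<k}"
      proof
        fix v assume "v \<in> {v \<in> {0..<N}. v mod 3 = u}"
        then have v: "v < 3 * k" "v mod 3 = u" using N_def by auto
        have "v = 3 * (v div 3) + u" using v(2) div_mult_mod_eq[of v 3] by (metis mult.commute)
        moreover have "v div 3 < k" using v(1) by simp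
        ultimately show "v \<in> (\<lambda>j. 3 * j + u) ` {0..<k}" by (metis atLeastLessThan_iff image_eqI le0)
      qed
      show "(\<lambda>j. 3 * j + u) ` {0..<k} \<subseteq> {v \<in> {0..<N}. v mod 3 = u}"
        using u N_def by auto
    qed
    moreover have "inj_on (\<lambda>j. 3 * j + u) {0..<k}" by (auto simp: inj_on_def)
    ultimately show ?thesis by (simp add: card_image)
  qed
  show ?thesis unfolding is_k_fold_cover_def is_cover_def N_def[symmetric]
    using img nb fib by blast
qed


theorem theorem2p15:
  shows "(\<forall>(VF :: 'b set) EF (VG :: 'a set) EG p k.
            connected_graph VF EF \<and> connected_graph VG EG \<and> is_k_fold_cover k VG EG VF EF p
            \<longrightarrow> conn_dom_number VG EG \<le> k * (conn_dom_number VF EF + 2) - 2)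
       \<and> (\<forall>k::nat. k > 0 \<longrightarrow>
            (\<exists>(VF :: nat set) EF (VG :: nat set) EG p.
              connected_graph VF EF \<and> connected_graph VG EG \<and> is_k_fold_cover k VG EG VF EF p
              \<and> conn_dom_number VG EG = k * (conn_dom_number VF EF + 2) - 2))"
proof (intro conjI)
  show "\<forall>(VF :: 'b set) EF (VG :: 'a set) EG p k.
            connected_graph VF EF \<and> connected_graph VG EG \<and> is_k_fold_cover k VG EG VF EF p
            \<longrightarrow> conn_dom_number VG EG \<le> k * (conn_dom_number VF EF + 2) - 2"
    using part1 by blast
next
  show "\<forall>k::nat. k > 0 \<longrightarrow>
            (\<exists>(VF :: nat set) EF (VG :: nat set) EG p.
              connected_graph VF EF \<and> connected_graph VG EG \<and> is_k_fold_cover k VG EG VF EF p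
              \<and> conn_dom_number VG EG = k * (conn_dom_number VF EF + 2) - 2)"
  proof (intro allI impI)
    fix k :: nat assume "k > 0"
    then have k: "k \<ge> 1" by simp
    have n3: "3 * k \<ge> 3" using k by simp
    have cF: "connected_graph {0..<3} (cyc 3)" by (rule cyc_connected) simp
    have cG: "connected_graph {0..<3*k} (cyc (3*k))" by (rule cyc_connected[OF n3])
    have cov: "is_k_fold_cover k {0..<3*k} (cyc (3*k)) {0..<3} (cyc 3) (\<lambda>i. i mod 3)"
      by (rule cover3[OF k])
    have dF: "conn_dom_number {0..<3} (cyc 3) = 1" using cdn_cyc[of 3] by simp
    have dG: "conn_dom_number {0..<3*k} (cyc (3*k)) = 3 * k - 2" using cdn_cyc[OF n3] .
    have "conn_dom_number {0..<3*k} (cyc (3*k)) = k * (conn_dom_number {0..<3} (cyc 3) + 2) - 2"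
      using dF dG by simp
    then show "\<exists>(VF :: nat set) EF (VG :: nat set) EG p.
              connected_graph VF EF \<and> connected_graph VG EG \<and> is_k_fold_cover k VG EG VF EF p
              \<and> conn_dom_number VG EG = k * (conn_dom_number VF EF + 2) - 2"
      using cF cG cov by blast
  qed
qed

end
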